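(* Consider the following schemata and rule over QHC: (D$_\nabla$) $\nabla\alpha\lor\neg\nabla\alpha$ for all problems $\alpha$ (decidability of all problems of the form $\nabla\alpha$); (WEM) $\neg\alpha\lor\neg\neg\alpha$ for all problems $\alpha$; (D$_{\rm prop}$) $!p\lor !\neg p$ for all propositions $p$ (decidability of all propositions); the Exclusive Disjunction Rule (EDR): from $\neg(\alpha\land\beta)$ infer $\nabla(\alpha\lor\beta)\to\nabla\alpha\lor\nabla\beta$, for all problems $\alpha,\beta$. Then, over QHC: (a) (D$_\nabla$) implies (WEM); (b) (WEM) implies that (EDR) is derivable; (c) (D$_\nabla$) is equivalent to the conjunction of Hilbert's No Ignorabimus Principle and (EDR); (d) (D$_{\rm prop}$) is equivalent to the conjunction of Kolmogorov's Stability Principle and (EDR).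
   Context: QHC is a two-sorted first-order calculus. Its only terms are individual variables. Every formula is either a problem (denoted by Greek letters $\alpha,\beta,\gamma,\dots$) or a proposition (denoted by Latin letters $p,q,\dots$). Atomic formulas are proposition variables $p(t_1,\dots,t_n)$ (of proposition type), problem variables $\pi(t_1,\dots,t_n)$ (of problem type), and the constants $0$ (a proposition, classical falsity) and $\bot$ (a problem, intuitionistic absurdity). Propositions are closed under the classical connectives $\land,\lor,\to$ and quantifiers $\exists,\forall$; problems are closed under the intuitionistic connectives $\land,\lor,\to$ and quantifiers $\exists,\forall$ (the same symbols are used, distinguished by the type of the arguments). $\neg p$ abbreviates $p\to 0$, $\neg\alpha$ abbreviates $\alpha\to\bot$, and $\leftrightarrow$ is defined as usual. There are two type-conversion operators: if $p$ is a proposition then $!p$ is a problem, and if $\alpha$ is a problem then $?\alpha$ is a proposition. Deductive system of QHC: all axioms and rules of classical predicate logic applied to all propositions; all postulates and rules of intuitionistic predicate logic applied to all problems; the rules $p\,/\,!p$ and $\alpha\,/\,?\alpha$; and the schemas $?!p\to p$; $\alpha\to\, !?\alpha$; $!(p\to q)\to(!p\to !q)$; $?(\alpha\to\beta)\to(?\alpha\to ?\beta)$; $!0\to\bot$; $?(\alpha\land\beta)\leftrightarrow ?\alpha\land ?\beta$; $?(\alpha\lor\beta)\leftrightarrow ?\alpha\lor ?\beta$; $?\bot\to 0$; $?\exists x\,\alpha(x)\leftrightarrow\exists x\,?\alpha(x)$; $?\forall x\,\alpha(x)\to\forall x\,?\alpha(x)$ (usual variable side conditions implicit). $\vdash A$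 means $A$ is derivable in QHC; $A\Rightarrow B$ means $\vdash A\to B$ and $A\Leftrightarrow B$ means $\vdash A\leftrightarrow B$ (with $A,B$ of the same type); $A\vdash B$ means $B$ is derivable in QHC from the premise $A$. Notation: $\Box p := ?!p$ (a proposition) and $\nabla\alpha := !?\alpha$ (a problem). QC and QH denote classical and intuitionistic predicate calculus. Hilbert's No Ignorabimus Principle is the schema $?(\gamma\lor\neg\gamma)$ for all problems $\gamma$. Kolmogorov's Stability Principle is the schema $\neg !\neg p\to !p$ for all propositions $p$. "Over QHC, X implies Y" means that after adding X (schema or rule) to QHC, Y (all its instances, resp. the rule) becomes derivable. *)

theory Defs
  imports Main
begin

text \<open>Individual variables are natural numbers (the only terms).
Propositions (classical sort) and problems (intuitionistic sort) are two
mutually recursive datatypes.\<close>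

datatype qprop =
    PVar nat "nat list"
  | Zero
  | PAnd qprop qprop
  | POr qprop qprop
  | PImp qprop qprop
  | PEx nat qprop
  | PAll nat qprop
  | Qm qprob                 (* ?alpha *)
and qprob =
    QVar nat "nat list"
  | Bot
  | QAnd qprob qprob
  | QOr qprob qprob
  | QImp qprob qprob
  | QEx nat qprob
  | QAll nat qprob
  | Bang qprop

primrec fvP :: "qprop \<Rightarrow> nat set" and fvQ :: "qprob \<Rightarrow> nat set" where
  "fvP (PVar n ts) = set ts"
| "fvP Zero = {}"
| "fvP (PAnd a b) = fvP a \<union> fvP b"
| "fvP (POr a b) = fvP a \<union> fvP b"
| "fvP (PImp a b) = fvP a \<union> fvP b"
| "fvP (PEx x a) = fvP a - {x}"
| "fvP (PAll x a) = fvP a - {x}"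
| "fvP (Qm a) = fvQ a"
| "fvQ (QVar n ts) = set ts"
| "fvQ Bot = {}"
| "fvQ (QAnd a b) = fvQ a \<union> fvQ b"
| "fvQ (QOr a b) = fvQ a \<union> fvQ b"
| "fvQ (QImp a b) = fvQ a \<union> fvQ b"
| "fvQ (QEx x a) = fvQ a - {x}"
| "fvQ (QAll x a) = fvQ a - {x}"
| "fvQ (Bang p) = fvP p"

definition rn :: "nat \<Rightarrow> nat \<Rightarrow> nat \<Rightarrow> nat" where
  "rn x y z = (if z = x then y else z)"

primrec substP :: "nat \<Rightarrow> nat \<Rightarrow> qprop \<Rightarrow> qprop"
    and substQ :: "nat \<Rightarrow> nat \<Rightarrow> qprob \<Rightarrow> qprob" where
  "substP x y (PVar n ts) = PVar n (map (rn x y) ts)"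
| "substP x y Zero = Zero"
| "substP x y (PAnd a b) = PAnd (substP x y a) (substP x y b)"
| "substP x y (POr a b) = POr (substP x y a) (substP x y b)"
| "substP x y (PImp a b) = PImp (substP x y a) (substP x y b)"
| "substP x y (PEx z a) = (if z = x then PEx z a else PEx z (substP x y a))"
| "substP x y (PAll z a) = (if z = x then PAll z a else PAll z (substP x y a))"
| "substP x y (Qm a) = Qm (substQ x y a)"
| "substQ x y (QVar n ts) = QVar n (map (rn x y) ts)"
| "substQ x y Bot = Bot"
| "substQ x y (QAnd a b) = QAnd (substQ x y a) (substQ x y b)"
| "substQ x y (QOr a b) = QOr (substQ x y a) (substQ x y b)"
| "substQ x y (QImp a b) = QImp (substQ x y a) (substQ x y b)"
| "substQ x y (QEx z a) = (if z = x then QEx z a else QEx z (substQ x y a))"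
| "substQ x y (QAll z a) = (if z = x then QAll z a else QAll z (substQ x y a))"
| "substQ x y (Bang p) = Bang (substP x y p)"

primrec freeforP :: "nat \<Rightarrow> nat \<Rightarrow> qprop \<Rightarrow> bool"
    and freeforQ :: "nat \<Rightarrow> nat \<Rightarrow> qprob \<Rightarrow> bool" where
  "freeforP x y (PVar n ts) = True"
| "freeforP x y Zero = True"
| "freeforP x y (PAnd a b) = (freeforP x y a \<and> freeforP x y b)"
| "freeforP x y (POr a b) = (freeforP x y a \<and> freeforP x y b)"
| "freeforP x y (PImp a b) = (freeforP x y a \<and> freeforP x y b)"
| "freeforP x y (PEx z a) = (z = x \<or> x \<notin> fvP a \<or> (z \<noteq> y \<and> freeforP x y a))"
| "freeforP x y (PAll z a) = (z = x \<or> x \<notin> fvP a \<or> (z \<noteq> y \<and> freeforP x y a))"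
| "freeforP x y (Qm a) = freeforQ x y a"
| "freeforQ x y (QVar n ts) = True"
| "freeforQ x y Bot = True"
| "freeforQ x y (QAnd a b) = (freeforQ x y a \<and> freeforQ x y b)"
| "freeforQ x y (QOr a b) = (freeforQ x y a \<and> freeforQ x y b)"
| "freeforQ x y (QImp a b) = (freeforQ x y a \<and> freeforQ x y b)"
| "freeforQ x y (QEx z a) = (z = x \<or> x \<notin> fvQ a \<or> (z \<noteq> y \<and> freeforQ x y a))"
| "freeforQ x y (QAll z a) = (z = x \<or> x \<notin> fvQ a \<or> (z \<noteq> y \<and> freeforQ x y a))"
| "freeforQ x y (Bang p) = freeforP x y p"

definition negP :: "qprop \<Rightarrow> qprop" where "negP p = PImp p Zero"
definition negQ :: "qprob \<Rightarrow> qprob" where "negQ a = QImp a Bot"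
definition iffP :: "qprop \<Rightarrow> qprop \<Rightarrow> qprop" where "iffP p q = PAnd (PImp p q) (PImp q p)"
definition iffQ :: "qprob \<Rightarrow> qprob \<Rightarrow> qprob" where "iffQ a b = QAnd (QImp a b) (QImp b a)"

definition Box :: "qprop \<Rightarrow> qprop" where "Box p = Qm (Bang p)"
definition Nabla :: "qprob \<Rightarrow> qprob" where "Nabla a = Bang (Qm a)"

text \<open>dP AxP AxQ R p: proposition p is derivable in QHC extended by the
extra proposition axioms AxP, extra problem axioms AxQ (these also serve as
premises/hypotheses) and extra one-premise problem rules R (pairs premise,
conclusion).\<close>

inductive dP :: "qprop set \<Rightarrow> qprob set \<Rightarrow> (qprob \<times> qprob) set \<Rightarrow> qprop \<Rightarrow> bool"
      and dQ :: "qprop set \<Rightarrow> qprob set \<Rightarrow> (qprob \<times> qprob) set \<Rightarrow> qprob \<Rightarrow> bool"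
  for AxP AxQ R where
  P1: "dP AxP AxQ R (PImp a (PImp b a))"
| P2: "dP AxP AxQ R (PImp (PImp a (PImp b c)) (PImp (PImp a b) (PImp a c)))"
| P3: "dP AxP AxQ R (PImp (PAnd a b) a)"
| P4: "dP AxP AxQ R (PImp (PAnd a b) b)"
| P5: "dP AxP AxQ R (PImp a (PImp b (PAnd a b)))"
| P6: "dP AxP AxQ R (PImp a (POr a b))"
| P7: "dP AxP AxQ R (PImp b (POr a b))"
| P8: "dP AxP AxQ R (PImp (PImp a c) (PImp (PImp b c) (PImp (POr a b) c)))"
| P9: "dP AxP AxQ R (PImp Zero a)"
| PDN: "dP AxP AxQ R (PImp (negP (negP a)) a)"
| PAllE: "freeforP x y a \<Longrightarrow> dP AxP AxQ R (PImp (PAll x a) (substP x y a))"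
| PExI: "freeforP x y a \<Longrightarrow> dP AxP AxQ R (PImp (substP x y a) (PEx x a))"
| PMP: "dP AxP AxQ R (PImp a b) \<Longrightarrow> dP AxP AxQ R a \<Longrightarrow> dP AxP AxQ R b"
| PAllI: "dP AxP AxQ R (PImp b a) \<Longrightarrow> x \<notin> fvP b \<Longrightarrow> dP AxP AxQ R (PImp b (PAll x a))"
| PExE: "dP AxP AxQ R (PImp a b) \<Longrightarrow> x \<notin> fvP b \<Longrightarrow> dP AxP AxQ R (PImp (PEx x a) b)"
| Q1: "dQ AxP AxQ R (QImp a (QImp b a))"
| Q2: "dQ AxP AxQ R (QImp (QImp a (QImp b c)) (QImp (QImp a b) (QImp a c)))"
| Q3: "dQ AxP AxQ R (QImp (QAnd a b) a)"
| Q4: "dQ AxP AxQ R (QImp (QAnd a b) b)"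
| Q5: "dQ AxP AxQ R (QImp a (QImp b (QAnd a b)))"
| Q6: "dQ AxP AxQ R (QImp a (QOr a b))"
| Q7: "dQ AxP AxQ R (QImp b (QOr a b))"
| Q8: "dQ AxP AxQ R (QImp (QImp a c) (QImp (QImp b c) (QImp (QOr a b) c)))"
| Q9: "dQ AxP AxQ R (QImp Bot a)"
| QAllE: "freeforQ x y a \<Longrightarrow> dQ AxP AxQ R (QImp (QAll x a) (substQ x y a))"
| QExI: "freeforQ x y a \<Longrightarrow> dQ AxP AxQ R (QImp (substQ x y a) (QEx x a))"
| QMP: "dQ AxP AxQ R (QImp a b) \<Longrightarrow> dQ AxP AxQ R a \<Longrightarrow> dQ AxP AxQ R b"
| QAllI: "dQ AxP AxQ R (QImp b a) \<Longrightarrow> x \<notin> fvQ b \<Longrightarrow> dQ AxP AxQ R (QImp b (QAll x a))"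
| QExE: "dQ AxP AxQ R (QImp a b) \<Longrightarrow> x \<notin> fvQ b \<Longrightarrow> dQ AxP AxQ R (QImp (QEx x a) b)"
| BangR: "dP AxP AxQ R p \<Longrightarrow> dQ AxP AxQ R (Bang p)"
| QmR: "dQ AxP AxQ R a \<Longrightarrow> dP AxP AxQ R (Qm a)"
| H1: "dP AxP AxQ R (PImp (Qm (Bang p)) p)"
| H2: "dQ AxP AxQ R (QImp a (Bang (Qm a)))"
| H3: "dQ AxP AxQ R (QImp (Bang (PImp p q)) (QImp (Bang p) (Bang q)))"
| H4: "dP AxP AxQ R (PImp (Qm (QImp a b)) (PImp (Qm a) (Qm b)))"
| H5: "dQ AxP AxQ R (QImp (Bang Zero) Bot)"
| H6: "dP AxP AxQ R (iffP (Qm (QAnd a b)) (PAnd (Qm a) (Qm b)))"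
| H7: "dP AxP AxQ R (iffP (Qm (QOr a b)) (POr (Qm a) (Qm b)))"
| H8: "dP AxP AxQ R (PImp (Qm Bot) Zero)"
| H9: "dP AxP AxQ R (iffP (Qm (QEx x a)) (PEx x (Qm a)))"
| H10: "dP AxP AxQ R (PImp (Qm (QAll x a)) (PAll x (Qm a)))"
| AxPI: "p \<in> AxP \<Longrightarrow> dP AxP AxQ R p"
| AxQI: "a \<in> AxQ \<Longrightarrow> dQ AxP AxQ R a"
| RuleI: "(a, b) \<in> R \<Longrightarrow> dQ AxP AxQ R a \<Longrightarrow> dQ AxP AxQ R b"

definition D_nabla :: "qprob set" where
  "D_nabla = {QOr (Nabla a) (negQ (Nabla a)) | a. True}"
definition WEM :: "qprob set" where
  "WEM = {QOr (negQ a) (negQ (negQ a)) | a. True}"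
definition D_prop :: "qprob set" where
  "D_prop = {QOr (Bang p) (Bang (negP p)) | p. True}"
definition HNIP :: "qprop set" where
  "HNIP = {Qm (QOr g (negQ g)) | g. True}"
definition KSP :: "qprob set" where
  "KSP = {QImp (negQ (Bang (negP p))) (Bang p) | p. True}"
definition EDR :: "(qprob \<times> qprob) set" where
  "EDR = {(negQ (QAnd a b), QImp (Nabla (QOr a b)) (QOr (Nabla a) (Nabla b))) | a b. True}"

definition EDR_derivable :: "qprop set \<Rightarrow> qprob set \<Rightarrow> (qprob \<times> qprob) set \<Rightarrow> bool" where
  "EDR_derivable AxP AxQ R = (\<forall>(h, c) \<in> EDR. dQ AxP (AxQ \<union> {h}) R c)"

end

theory Submission
  imports Defs
begin

locale qc = fixes AxP :: "qprop set" and AxQ :: "qprob set" and R :: "(qprob \<times> qprob) set"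
begin
abbreviation TQ where "TQ a \<equiv> dQ AxP AxQ R a"
abbreviation TP where "TP p \<equiv> dP AxP AxQ R p"

lemma q_K: "TQ b \<Longrightarrow> TQ (QImp a b)" by (rule QMP[OF Q1])
lemma q_S: "TQ (QImp a (QImp b c)) \<Longrightarrow> TQ (QImp a b) \<Longrightarrow> TQ (QImp a c)" by (meson QMP Q2)
lemma q_I: "TQ (QImp a a)" by (meson q_S Q1)
lemma q_syl: "TQ (QImp a b) \<Longrightarrow> TQ (QImp b c) \<Longrightarrow> TQ (QImp a c)" by (meson q_S q_K)
lemma q_C: "TQ (QImp a (QImp b c)) \<Longrightarrow> TQ (QImp b (QImp a c))"
  by (meson q_syl Q1 QMP Q2)
lemma q_B: "TQ (QImp z w) \<Longrightarrow> TQ (QImp (QImp y z) (QImp y w))" by (meson QMP Q2 q_K)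
lemma q_post2: "TQ (QImp x (QImp y z)) \<Longrightarrow> TQ (QImp z w) \<Longrightarrow> TQ (QImp x (QImp y w))"
  by (meson q_syl q_B)
lemma q_pre: "TQ (QImp a b) \<Longrightarrow> TQ (QImp (QImp b c) (QImp a c))"
proof -
  assume ab: "TQ (QImp a b)"
  have "TQ (QImp (QImp b c) (QImp (QImp a b) (QImp a c)))" by (rule q_syl[OF Q1 Q2])
  then have "TQ (QImp (QImp a b) (QImp (QImp b c) (QImp a c)))" by (rule q_C)
  then show ?thesis using ab by (rule QMP)
qed
lemma q_pre2: "TQ (QImp x (QImp y z)) \<Longrightarrow> TQ (QImp y' y) \<Longrightarrow> TQ (QImp x (QImp y' z))"
  by (meson q_syl q_pre)
lemma q_orE: "TQ (QImp a c) \<Longrightarrow> TQ (QImp b c) \<Longrightarrow> TQ (QImp (QOr a b) c)" by (meson QMP Q8)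
lemma q_uncurry: "TQ (QImp a (QImp b c)) \<Longrightarrow> TQ (QImp (QAnd a b) c)"
  by (meson q_S q_syl Q3 Q4)
lemma q_curry: "TQ (QImp (QAnd a b) c) \<Longrightarrow> TQ (QImp a (QImp b c))" by (meson q_post2 Q5)
lemma q_dn: "TQ (QImp a (QImp (QImp a c) c))" by (rule q_C[OF q_I])

lemma p_K: "TP b \<Longrightarrow> TP (PImp a b)" by (rule PMP[OF P1])
lemma p_S: "TP (PImp a (PImp b c)) \<Longrightarrow> TP (PImp a b) \<Longrightarrow> TP (PImp a c)" by (meson PMP P2)
lemma p_I: "TP (PImp a a)" by (meson p_S P1)
lemma p_syl: "TP (PImp a b) \<Longrightarrow> TP (PImp b c) \<Longrightarrow> TP (PImp a c)" by (meson p_S p_K)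
lemma p_C: "TP (PImp a (PImp b c)) \<Longrightarrow> TP (PImp b (PImp a c))"
  by (meson p_syl P1 PMP P2)
lemma p_B: "TP (PImp z w) \<Longrightarrow> TP (PImp (PImp y z) (PImp y w))" by (meson PMP P2 p_K)
lemma p_post2: "TP (PImp x (PImp y z)) \<Longrightarrow> TP (PImp z w) \<Longrightarrow> TP (PImp x (PImp y w))"
  by (meson p_syl p_B)
lemma p_pre: "TP (PImp a b) \<Longrightarrow> TP (PImp (PImp b c) (PImp a c))"
proof -
  assume ab: "TP (PImp a b)"
  have "TP (PImp (PImp b c) (PImp (PImp a b) (PImp a c)))" by (rule p_syl[OF P1 P2])
  then have "TP (PImp (PImp a b) (PImp (PImp b c) (PImp a c)))" by (rule p_C)
  then show ?thesis using ab by (rule PMP)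
qed
lemma p_orE: "TP (PImp a c) \<Longrightarrow> TP (PImp b c) \<Longrightarrow> TP (PImp (POr a b) c)" by (meson PMP P8)
lemma p_dn: "TP (PImp a (PImp (PImp a c) c))" by (rule p_C[OF p_I])
lemma iff_fw: "TP (iffP p q) \<Longrightarrow> TP (PImp p q)" unfolding iffP_def by (meson PMP P3)
lemma iff_bw: "TP (iffP p q) \<Longrightarrow> TP (PImp q p)" unfolding iffP_def by (meson PMP P4)

lemma p_negor: "TP (PImp (PImp a Zero) (PImp (POr a b) b))"
  apply (rule p_C, rule p_orE)
   apply (rule p_post2[OF p_dn P9])
  apply (rule P1)
  done
lemma q_negor: "TQ (QImp (QImp a Bot) (QImp (QOr a b) b))"
  apply (rule q_C, rule q_orE)
   apply (rule q_post2[OF q_dn Q9])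
  apply (rule Q1)
  done
lemma q_negor2: "TQ (QImp (QImp b Bot) (QImp (QOr a b) a))"
  apply (rule q_C, rule q_orE)
   apply (rule Q1)
  apply (rule q_post2[OF q_dn Q9])
  done

lemma bang_mono: "TP (PImp p q) \<Longrightarrow> TQ (QImp (Bang p) (Bang q))" by (rule QMP[OF H3 BangR])
lemma bang_imp2: "TP (PImp p (PImp q r)) \<Longrightarrow> TQ (QImp (Bang p) (QImp (Bang q) (Bang r)))"
  by (meson bang_mono H3 q_syl)
lemma qm_mono: "TQ (QImp a b) \<Longrightarrow> TP (PImp (Qm a) (Qm b))" by (rule PMP[OF H4 QmR])
lemma qm_imp2: "TQ (QImp a (QImp b c)) \<Longrightarrow> TP (PImp (Qm a) (PImp (Qm b) (Qm c)))"
  by (meson qm_mono H4 p_syl)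
lemma nab_imp2: "TQ (QImp a (QImp b c)) \<Longrightarrow>
   TQ (QImp (Bang (Qm a)) (QImp (Bang (Qm b)) (Bang (Qm c))))"
  by (rule bang_imp2[OF qm_imp2])
lemma nab_bot: "TQ (QImp (Bang (Qm Bot)) Bot)" by (rule q_syl[OF bang_mono[OF H8] H5])
lemma neg_nab3: "TQ (QImp (Bang (Qm (QImp a Bot))) (QImp (Bang (Qm a)) Bot))"
  by (rule q_post2[OF nab_imp2[OF q_I] nab_bot])
lemma neg_nab1: "TQ (QImp (QImp a Bot) (QImp (Bang (Qm a)) Bot))"
  by (rule q_syl[OF H2 neg_nab3])
lemma neg_nab2: "TQ (QImp (QImp (Bang (Qm a)) Bot) (QImp a Bot))" by (rule q_pre[OF H2])
lemma nab_dn: "TQ (QImp (Bang (Qm a)) (QImp (QImp a Bot) Bot))" by (rule q_C[OF neg_nab1])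

lemma edr_core:
  assumes h: "TQ (QImp (QAnd a b) Bot)"
    and w: "TQ (QOr (QImp a Bot) (QImp (QImp a Bot) Bot))"
  shows "TQ (QImp (Bang (Qm (QOr a b))) (QOr (Bang (Qm a)) (Bang (Qm b))))"
proof -
  have c1: "TQ (QImp (QImp a Bot) (QImp (Bang (Qm (QOr a b))) (QOr (Bang (Qm a)) (Bang (Qm b)))))"
    by (rule q_syl[OF H2 q_post2[OF nab_imp2[OF q_negor] Q7]])
  have "TQ (QImp b (QImp a Bot))" by (rule q_C[OF q_curry[OF h]])
  then have "TQ (QImp b (QImp (QImp (QImp a Bot) Bot) Bot))" by (rule q_syl[OF _ q_dn])
  then have c2: "TQ (QImp (QImp (QImp a Bot) Bot) (QImp b Bot))" by (rule q_C)
  have c3: "TQ (QImp (QImp (QImp a Bot) Bot) (QImp (Bang (Qm (QOr a b))) (QOr (Bang (Qm a)) (Bang (Qm b)))))"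
    by (rule q_syl[OF c2 q_syl[OF H2 q_post2[OF nab_imp2[OF q_negor2] Q6]]])
  show ?thesis by (rule QMP[OF q_orE[OF c1 c3] w])
qed

lemma wem_from_dn: "TQ (QOr (Bang (Qm a)) (QImp (Bang (Qm a)) Bot)) \<Longrightarrow>
   TQ (QOr (QImp a Bot) (QImp (QImp a Bot) Bot))"
  by (rule QMP[OF q_orE[OF q_syl[OF nab_dn Q7] q_syl[OF neg_nab2 Q6]]])

lemma hnip_from_dn: "TQ (QOr (Bang (Qm g)) (QImp (Bang (Qm g)) Bot)) \<Longrightarrow>
   TP (Qm (QOr g (QImp g Bot)))"
proof -
  assume d: "TQ (QOr (Bang (Qm g)) (QImp (Bang (Qm g)) Bot))"
  have "TP (POr (Qm (Bang (Qm g))) (Qm (QImp (Bang (Qm g)) Bot)))"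
    by (rule PMP[OF iff_fw[OF H7] QmR[OF d]])
  moreover have "TP (PImp (POr (Qm (Bang (Qm g))) (Qm (QImp (Bang (Qm g)) Bot))) (POr (Qm g) (Qm (QImp g Bot))))"
    by (rule p_orE[OF p_syl[OF H1 P6] p_syl[OF qm_mono[OF neg_nab2] P7]])
  ultimately have "TP (POr (Qm g) (Qm (QImp g Bot)))" by (rule PMP[rotated])
  then show ?thesis by (rule PMP[OF iff_bw[OF H7]])
qed

lemma ksp_from_dp: "TQ (QOr (Bang p) (Bang (PImp p Zero))) \<Longrightarrow>
   TQ (QImp (QImp (Bang (PImp p Zero)) Bot) (Bang p))"
  by (rule QMP[OF q_orE[OF Q1 q_post2[OF q_dn Q9]]])

lemma edr_from_dp: "TQ (QOr (Bang (Qm a)) (Bang (PImp (Qm a) Zero))) \<Longrightarrow>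
   TQ (QImp (Bang (Qm (QOr a b))) (QOr (Bang (Qm a)) (Bang (Qm b))))"
proof -
  assume d: "TQ (QOr (Bang (Qm a)) (Bang (PImp (Qm a) Zero)))"
  have e1: "TQ (QImp (Bang (Qm (QOr a b))) (Bang (POr (Qm a) (Qm b))))"
    by (rule bang_mono[OF iff_fw[OF H7]])
  have e2: "TQ (QImp (Bang (PImp (Qm a) Zero)) (QImp (Bang (POr (Qm a) (Qm b))) (Bang (Qm b))))"
    by (rule bang_imp2[OF p_negor])
  have e3: "TQ (QImp (Bang (PImp (Qm a) Zero)) (QImp (Bang (Qm (QOr a b))) (QOr (Bang (Qm a)) (Bang (Qm b)))))"
    by (rule q_post2[OF q_pre2[OF e2 e1] Q7])
  have e4: "TQ (QImp (Bang (Qm a)) (QImp (Bang (Qm (QOr a b))) (QOr (Bang (Qm a)) (Bang (Qm b)))))"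
    by (rule q_syl[OF Q6 Q1])
  show ?thesis by (rule QMP[OF q_orE[OF e4 e3] d])
qed


lemma dn_from_hnip_edr:
  assumes hn: "TP (Qm (QOr g (QImp g Bot)))"
    and edr: "\<And>a b. TQ (QImp (QAnd a b) Bot) \<Longrightarrow>
       TQ (QImp (Bang (Qm (QOr a b))) (QOr (Bang (Qm a)) (Bang (Qm b))))"
  shows "TQ (QOr (Bang (Qm g)) (QImp (Bang (Qm g)) Bot))"
proof -
  have h: "TQ (QImp (QAnd g (QImp g Bot)) Bot)" by (rule q_uncurry[OF q_dn])
  have "TQ (QOr (Bang (Qm g)) (Bang (Qm (QImp g Bot))))"
    by (rule QMP[OF edr[OF h] BangR[OF hn]])
  then show ?thesis by (rule QMP[OF q_orE[OF Q6 q_syl[OF neg_nab3 Q7]]])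
qed

lemma dp_from_ksp_edr:
  assumes ksp: "\<And>q. TQ (QImp (QImp (Bang (PImp q Zero)) Bot) (Bang q))"
    and edr: "\<And>a b. TQ (QImp (QAnd a b) Bot) \<Longrightarrow>
       TQ (QImp (Bang (Qm (QOr a b))) (QOr (Bang (Qm a)) (Bang (Qm b))))"
  shows "TQ (QOr (Bang p) (Bang (PImp p Zero)))"
proof -
  define x where "x = Bang p"
  define y where "y = Bang (PImp p Zero)"
  define q where "q = Qm (QOr x y)"
  have h: "TQ (QImp (QAnd x y) Bot)" unfolding x_def y_def
    by (rule q_uncurry[OF q_post2[OF bang_imp2[OF p_dn] H5]])
  have f2: "\<And>z. TQ (QImp (Bang (PImp (Qm z) Zero)) (QImp z Bot))"
    by (rule q_pre2[OF q_post2[OF bang_imp2[OF p_I] H5] H2])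
  have fx: "TP (PImp (PImp q Zero) (PImp (Qm x) Zero))" unfolding q_def
    by (rule p_pre[OF p_syl[OF P6 iff_bw[OF H7]]])
  have fy: "TP (PImp (PImp q Zero) (PImp (Qm y) Zero))" unfolding q_def
    by (rule p_pre[OF p_syl[OF P7 iff_bw[OF H7]]])
  have gx: "TQ (QImp (Bang (PImp q Zero)) (QImp x Bot))" by (rule q_syl[OF bang_mono[OF fx] f2])
  have gy: "TQ (QImp (Bang (PImp q Zero)) (QImp y Bot))" by (rule q_syl[OF bang_mono[OF fy] f2])
  have gx': "TQ (QImp (Bang (PImp q Zero)) x)" unfolding x_def
    by (rule q_syl[OF gy[unfolded y_def] ksp])
  have nn: "TQ (QImp (Bang (PImp q Zero)) Bot)" by (rule q_S[OF gx gx'])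
  have bq: "TQ (Bang q)" by (rule QMP[OF ksp nn])
  have "TQ (QOr (Bang (Qm x)) (Bang (Qm y)))"
    by (rule QMP[OF edr[OF h] bq[unfolded q_def]])
  then show ?thesis unfolding x_def y_def
    by (rule QMP[OF q_orE[OF q_syl[OF bang_mono[OF H1] Q6] q_syl[OF bang_mono[OF H1] Q7]]])
qed

end

theorem proposition2p29:
  shows "(\<forall>a \<in> WEM. dQ {} D_nabla {} a)
    \<and> EDR_derivable {} WEM {}
    \<and> (((\<forall>p \<in> HNIP. dP {} D_nabla {} p) \<and> EDR_derivable {} D_nabla {})
         \<and> (\<forall>a \<in> D_nabla. dQ HNIP {} EDR a))
    \<and> (((\<forall>a \<in> KSP. dQ {} D_prop {} a) \<and> EDR_derivable {} D_prop {})
         \<and> (\<forall>a \<in> D_prop. dQ {} KSP EDR a))"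
proof (intro conjI)
  have dn: "\<And>AxQ a. D_nabla \<subseteq> AxQ \<Longrightarrow> dQ {} AxQ {} (QOr (Bang (Qm a)) (QImp (Bang (Qm a)) Bot))"
    by (rule AxQI) (auto simp: D_nabla_def Nabla_def negQ_def)
  show "\<forall>a \<in> WEM. dQ {} D_nabla {} a"
    unfolding WEM_def negQ_def using qc.wem_from_dn[OF dn] by auto
  show "EDR_derivable {} WEM {}"
    unfolding EDR_derivable_def EDR_def
  proof clarify
    fix a b
    have w: "dQ {} (WEM \<union> {negQ (QAnd a b)}) {} (QOr (QImp a Bot) (QImp (QImp a Bot) Bot))"
      by (rule AxQI) (auto simp: WEM_def negQ_def)
    have h: "dQ {} (WEM \<union> {negQ (QAnd a b)}) {} (QImp (QAnd a b) Bot)"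
      by (rule AxQI) (auto simp: negQ_def)
    show "dQ {} (WEM \<union> {negQ (QAnd a b)}) {} (QImp (Nabla (QOr a b)) (QOr (Nabla a) (Nabla b)))"
      unfolding Nabla_def by (rule qc.edr_core[OF h w])
  qed
  show "\<forall>p \<in> HNIP. dP {} D_nabla {} p"
    unfolding HNIP_def negQ_def using qc.hnip_from_dn[OF dn] by auto
  show "EDR_derivable {} D_nabla {}"
    unfolding EDR_derivable_def EDR_def
  proof clarify
    fix a b
    have h: "dQ {} (D_nabla \<union> {negQ (QAnd a b)}) {} (QImp (QAnd a b) Bot)"
      by (rule AxQI) (auto simp: negQ_def)
    show "dQ {} (D_nabla \<union> {negQ (QAnd a b)}) {} (QImp (Nabla (QOr a b)) (QOr (Nabla a) (Nabla b)))"
      unfolding Nabla_def by (rule qc.edr_core[OF h qc.wem_from_dn[OF dn]]) auto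
  qed
  have edr: "\<And>AxP AxQ a b. dQ AxP AxQ EDR (QImp (QAnd a b) Bot) \<Longrightarrow>
       dQ AxP AxQ EDR (QImp (Bang (Qm (QOr a b))) (QOr (Bang (Qm a)) (Bang (Qm b))))"
    by (erule RuleI[rotated]) (auto simp: EDR_def negQ_def Nabla_def)
  show "\<forall>a \<in> D_nabla. dQ HNIP {} EDR a"
  proof
    fix a assume "a \<in> D_nabla"
    then obtain g where g: "a = QOr (Bang (Qm g)) (QImp (Bang (Qm g)) Bot)"
      by (auto simp: D_nabla_def Nabla_def negQ_def)
    have hn: "dP HNIP {} EDR (Qm (QOr g (QImp g Bot)))"
      by (rule AxPI) (auto simp: HNIP_def negQ_def)
    show "dQ HNIP {} EDR a" unfolding g by (rule qc.dn_from_hnip_edr[OF hn edr])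
  qed
  have dp: "\<And>AxQ p. D_prop \<subseteq> AxQ \<Longrightarrow> dQ {} AxQ {} (QOr (Bang p) (Bang (PImp p Zero)))"
    by (rule AxQI) (auto simp: D_prop_def negP_def)
  show "\<forall>a \<in> KSP. dQ {} D_prop {} a"
    unfolding KSP_def negQ_def negP_def using qc.ksp_from_dp[OF dp] by auto
  show "EDR_derivable {} D_prop {}"
    unfolding EDR_derivable_def EDR_def
  proof clarify
    fix a b
    show "dQ {} (D_prop \<union> {negQ (QAnd a b)}) {} (QImp (Nabla (QOr a b)) (QOr (Nabla a) (Nabla b)))"
      unfolding Nabla_def by (rule qc.edr_from_dp[OF dp]) auto
  qed
  show "\<forall>a \<in> D_prop. dQ {} KSP EDR a"
  proof
    fix a assume "a \<in> D_prop"
    then obtain p where p: "a = QOr (Bang p) (Bang (PImp p Zero))"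
      by (auto simp: D_prop_def negP_def)
    have ksp: "\<And>q. dQ {} KSP EDR (QImp (QImp (Bang (PImp q Zero)) Bot) (Bang q))"
      by (rule AxQI) (auto simp: KSP_def negQ_def negP_def)
    show "dQ {} KSP EDR a" unfolding p by (rule qc.dp_from_ksp_edr[OF ksp edr])
  qed
qed

end
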